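(* Fix $2<p<\infty$ and constants $c,c',c''>0$. There is $C$ depending only on $p,c,c''$ such that: if a square $Q$ satisfies $\mathbf{R}(c,c',c'')$ relative to a finite set $E_0\subset\mathbb{R}^2$, then $\|Q\cap E_0\|_{\dot B}\ge C^{-1}\delta_Q^{2/p-1}$.
   Context: A square $Q$ is a closed axis-parallel square with side length $\delta_Q$. The Besov seminorm of a set $\Omega$ is $\|\Omega\|_{\dot B}=\inf\{\|\varphi\|_{\dot B(\mathbb{R})}\}$ over Euclidean coordinates $(z_1,z_2)$ and $\varphi$ with $\Omega\subset\{(z_1,\varphi(z_1))_{z_1z_2}\}$, where $\|\varphi\|_{\dot B(\mathbb{R})}=\big(\iint\frac{|\varphi'(x)-\varphi'(y)|^p}{|x-y|^p}dxdy\big)^{1/p}$. Roughness: $Q$ satisfies $\mathbf{R}(c,c',c'')$ relative to $E_0$ iff (R1) there exist $x_1,x_2,y_1,y_2\in E_0\cap Q$ with $x_1\ne x_2$, $y_1\ne y_2$ and $\min\{|v_1-v_2|,|v_1+v_2|\}>c''$ where $v_1=\frac{x_1-x_2}{|x_1-x_2|}$, $v_2=\frac{y_1-y_2}{|y_1-y_2|}$; or (R2) $c\,\delta_Q^{2/p-1}\le\|E_0\cap Q\|_{\dot B}\le c'\delta_Q^{2/p-1}$. *)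

theory Defs
  imports "HOL-Analysis.Analysis"
begin

text \<open>Points of the plane are pairs of reals; the product metric on real \<times> real is Euclidean.\<close>

definition besov_fun :: "real \<Rightarrow> (real \<Rightarrow> real) \<Rightarrow> ennreal" where
  "besov_fun p \<phi> =
     (let I = (\<integral>\<^sup>+ x. \<integral>\<^sup>+ y. ennreal (\<bar>deriv \<phi> x - deriv \<phi> y\<bar> powr p / \<bar>x - y\<bar> powr p) \<partial>lborel \<partial>lborel)
      in if I = \<infinity> then \<infinity> else ennreal ((enn2real I) powr (1 / p)))"

text \<open>Euclidean coordinates: a rigid motion T (distance-preserving map of the plane);
  the point z has coordinates T z = (z1, z2).\<close>
definition euclid_coords :: "(real \<times> real \<Rightarrow> real \<times> real) \<Rightarrow> bool" where
  "euclid_coords T \<longleftrightarrow> (\<forall>x y. dist (T x) (T y) = dist x y)"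

definition besov_set :: "real \<Rightarrow> (real \<times> real) set \<Rightarrow> ennreal" where
  "besov_set p \<Omega> = (INF \<phi> \<in> {\<phi>. (\<forall>x. \<phi> differentiable at x) \<and>
        (\<exists>T. euclid_coords T \<and> (\<forall>z\<in>\<Omega>. snd (T z) = \<phi> (fst (T z))))}. besov_fun p \<phi>)"

definition square :: "real \<times> real \<Rightarrow> real \<Rightarrow> (real \<times> real) set" where
  "square a \<delta> = {fst a .. fst a + \<delta>} \<times> {snd a .. snd a + \<delta>}"

definition unitv :: "real \<times> real \<Rightarrow> real \<times> real" where
  "unitv v = (1 / norm v) *\<^sub>R v"

definition rough :: "real \<Rightarrow> real \<Rightarrow> real \<Rightarrow> real \<Rightarrow> (real \<times> real) set \<Rightarrow> real \<times> real \<Rightarrow> real \<Rightarrow> bool" where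
  "rough p c c' c'' E0 a \<delta> \<longleftrightarrow>
     (\<exists>x1 x2 y1 y2. x1 \<in> E0 \<inter> square a \<delta> \<and> x2 \<in> E0 \<inter> square a \<delta> \<and>
        y1 \<in> E0 \<inter> square a \<delta> \<and> y2 \<in> E0 \<inter> square a \<delta> \<and> x1 \<noteq> x2 \<and> y1 \<noteq> y2 \<and>
        min (norm (unitv (x1 - x2) - unitv (y1 - y2))) (norm (unitv (x1 - x2) + unitv (y1 - y2))) > c'')
   \<or> (ennreal (c * \<delta> powr (2 / p - 1)) \<le> besov_set p (E0 \<inter> square a \<delta>) \<and>
      besov_set p (E0 \<inter> square a \<delta>) \<le> ennreal (c' * \<delta> powr (2 / p - 1)))"

end

theory Submission
  imports Defs
begin

lemma deriv_meas:
  fixes \<phi> :: "real \<Rightarrow> real"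
  assumes d: "\<forall>x. \<phi> differentiable at x"
  shows "deriv \<phi> \<in> borel_measurable borel"
proof (rule borel_measurable_LIMSEQ_real)
  have cont: "continuous_on UNIV \<phi>"
    using d by (meson continuous_at_imp_continuous_on differentiable_imp_continuous_within)
  fix i
  show "(\<lambda>x. (\<phi> (x + inverse (real (Suc i))) - \<phi> x) / inverse (real (Suc i))) \<in> borel_measurable borel"
    by (intro borel_measurable_continuous_onI continuous_intros continuous_on_compose2[OF cont]) auto
next
  fix x :: real
  have "DERIV \<phi> x :> deriv \<phi> x"
    using d DERIV_deriv_iff_real_differentiable by blast
  then have L: "((\<lambda>h. (\<phi> (x + h) - \<phi> x) / h) \<longlongrightarrow> deriv \<phi> x) (at 0)"
    by (simp add: DERIV_def)
  have F: "filterlim (\<lambda>i. inverse (real (Suc i))) (at 0) sequentially"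
    using LIMSEQ_inverse_real_of_nat by (intro filterlim_atI) auto
  show "(\<lambda>i. (\<phi> (x + inverse (real (Suc i))) - \<phi> x) / inverse (real (Suc i))) \<longlonglongrightarrow> deriv \<phi> x"
    using filterlim_compose[OF L F] by (simp add: o_def)
qed

lemma ftc_bound:
  fixes \<psi> g :: "real \<Rightarrow> real"
  assumes der: "\<And>x. (\<psi> has_real_derivative g x) (at x)"
    and gm: "g \<in> borel_measurable borel" and ab: "a \<le> b"
  shows "ennreal \<bar>\<psi> b - \<psi> a\<bar> \<le> (\<integral>\<^sup>+x. ennreal \<bar>g x\<bar> * indicator {a..b} x \<partial>lborel)"
proof (cases "(\<integral>\<^sup>+x. ennreal \<bar>g x\<bar> * indicator {a..b} x \<partial>lborel) = \<infinity>")
  case True then show ?thesis by simp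
next
  case False
  let ?h = "\<lambda>x. indicator {a..b} x * g x"
  have hm: "?h \<in> borel_measurable lborel" using gm by measurable
  have eq: "(\<integral>\<^sup>+x. ennreal (norm (?h x)) \<partial>lborel) = (\<integral>\<^sup>+x. ennreal \<bar>g x\<bar> * indicator {a..b} x \<partial>lborel)"
    by (intro nn_integral_cong) (auto simp: indicator_def)
  have int: "integrable lborel ?h"
    by (rule integrableI_bounded[OF hm]) (use False eq in \<open>simp add: less_top\<close>)
  have si: "set_integrable lborel {a..b} g"
    using int by (simp add: set_integrable_def)
  have "(g has_integral (\<psi> b - \<psi> a)) {a..b}"
    by (intro fundamental_theorem_of_calculus ab)
       (auto intro: has_field_derivative_imp_has_derivative has_derivative_at_withinI
          simp: has_real_derivative_iff_has_vector_derivative[symmetric] der has_field_derivative_at_within)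
  then have "(LINT x : {a..b} | lborel. g x) = \<psi> b - \<psi> a"
    using set_borel_integral_eq_integral(2)[OF si] by (simp add: integral_unique)
  then have e1: "integral\<^sup>L lborel ?h = \<psi> b - \<psi> a"
    by (simp add: set_lebesgue_integral_def)
  have "\<bar>integral\<^sup>L lborel ?h\<bar> \<le> integral\<^sup>L lborel (\<lambda>x. \<bar>?h x\<bar>)"
    by (rule integral_abs_bound)
  moreover have "ennreal (integral\<^sup>L lborel (\<lambda>x. \<bar>?h x\<bar>)) = (\<integral>\<^sup>+x. ennreal (norm (?h x)) \<partial>lborel)"
    by (subst nn_integral_eq_integral) (auto intro: integrable_abs int)
  ultimately show ?thesis using e1 eq
    by (metis ennreal_leI)
qed


lemma pw:
  fixes u v l lam p :: real
  assumes "\<bar>v\<bar> \<le> l" "lam > 0" "p > 1" "v = 0 \<Longrightarrow> u = 0"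
  shows "\<bar>u\<bar> \<le> l * (lam powr (1 - p) * (\<bar>u\<bar> powr p / \<bar>v\<bar> powr p) + lam)"
proof (cases "v = 0")
  case True
  then show ?thesis using assms by simp
next
  case False
  let ?G = "\<bar>u\<bar> / \<bar>v\<bar>"
  have G0: "?G \<ge> 0" by simp
  have "?G \<le> lam powr (1 - p) * ?G powr p + lam"
  proof (cases "?G \<le> lam")
    case True then show ?thesis
      by (smt (verit) G0 mult_nonneg_nonneg powr_ge_zero)
  next
    case False
    then have "lam powr (1 - p) * ?G powr p \<ge> ?G powr (1 - p) * ?G powr p"
      by (intro mult_right_mono powr_mono2') (use assms in auto)
    also have "?G powr (1 - p) * ?G powr p = ?G"
      using False assms by (simp add: powr_add[symmetric])
    finally show ?thesis using assms by simp
  qed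
  then have "\<bar>u\<bar> = \<bar>v\<bar> * ?G" using False by simp
  also have "\<dots> \<le> l * (lam powr (1 - p) * ?G powr p + lam)"
    by (intro mult_mono) (use assms \<open>?G \<le> _\<close> in auto)
  finally show ?thesis by (simp add: powr_divide)
qed


lemma step:
  fixes \<phi> :: "real \<Rightarrow> real" and p s lam a1 a2 b1 b2 :: real
  assumes d: "\<forall>x. \<phi> differentiable at x" and p: "p > 1"
    and S: "(\<integral>\<^sup>+x. \<integral>\<^sup>+y. ennreal (\<bar>deriv \<phi> x - deriv \<phi> y\<bar> powr p / \<bar>x - y\<bar> powr p) \<partial>lborel \<partial>lborel) = ennreal s"
    and s0: "s \<ge> 0"
    and a: "a1 < a2" and sub: "b1 \<le> a1" "a2 \<le> b2" and lam: "lam > 0"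
  shows "\<bar>(\<phi> a2 - \<phi> a1) / (a2 - a1) - (\<phi> b2 - \<phi> b1) / (b2 - b1)\<bar>
           \<le> lam powr (1 - p) * s / (a2 - a1) + lam * (b2 - b1)"
proof -
  define f where "f = deriv \<phi>"
  have fm[measurable]: "f \<in> borel_measurable borel" unfolding f_def using deriv_meas d by blast
  have der: "\<And>x. (\<phi> has_real_derivative f x) (at x)"
    unfolding f_def using d DERIV_deriv_iff_real_differentiable by blast
  define lA where "lA = a2 - a1"
  define lB where "lB = b2 - b1"
  define sA where "sA = (\<phi> a2 - \<phi> a1) / lA"
  define sB where "sB = (\<phi> b2 - \<phi> b1) / lB"
  have lA: "lA > 0" using a lA_def by simp
  have lB: "lB > 0" using a sub lB_def by simp
  define F where "F = (\<lambda>x y. ennreal (\<bar>f x - f y\<bar> powr p / \<bar>x - y\<bar> powr p))"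
  have Fm[measurable]: "(\<lambda>(x, y). F x y) \<in> borel_measurable (lborel \<Otimes>\<^sub>M lborel)"
    unfolding F_def by measurable
  have Fsym: "F x y = F y x" for x y unfolding F_def by (simp add: abs_minus_commute)
  have S': "(\<integral>\<^sup>+y. \<integral>\<^sup>+x. F x y \<partial>lborel \<partial>lborel) = ennreal s"
    using S unfolding F_def f_def by (simp add: Fsym[unfolded F_def f_def])
  define c1 where "c1 = lB * lam powr (1 - p)"
  define c2 where "c2 = lB * lam"
  have c1: "c1 \<ge> 0" "c2 \<ge> 0" using lB lam by (auto simp: c1_def c2_def)
  have one: "ennreal (\<bar>sA - f y\<bar> * lA) \<le> (\<integral>\<^sup>+x. ennreal \<bar>f x - f y\<bar> * indicator {a1..a2} x \<partial>lborel)" for y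
  proof -
    have "ennreal \<bar>(\<phi> a2 - f y * a2) - (\<phi> a1 - f y * a1)\<bar>
          \<le> (\<integral>\<^sup>+x. ennreal \<bar>f x - f y\<bar> * indicator {a1..a2} x \<partial>lborel)"
      by (rule ftc_bound) (auto intro!: derivative_eq_intros der a[THEN less_imp_le])
    moreover have "\<bar>(\<phi> a2 - f y * a2) - (\<phi> a1 - f y * a1)\<bar> = \<bar>sA - f y\<bar> * lA"
      using lA unfolding sA_def lA_def
      by (simp add: abs_mult[symmetric] field_simps)
    ultimately show ?thesis by simp
  qed
  have two: "ennreal (\<bar>sA - sB\<bar> * lB) \<le> (\<integral>\<^sup>+y. ennreal \<bar>sA - f y\<bar> * indicator {b1..b2} y \<partial>lborel)"
  proof -
    have "ennreal \<bar>(sA * b2 - \<phi> b2) - (sA * b1 - \<phi> b1)\<bar>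
          \<le> (\<integral>\<^sup>+y. ennreal \<bar>sA - f y\<bar> * indicator {b1..b2} y \<partial>lborel)"
      by (rule ftc_bound) (use a sub in \<open>auto intro!: derivative_eq_intros der\<close>)
    moreover have "\<bar>(sA * b2 - \<phi> b2) - (sA * b1 - \<phi> b1)\<bar> = \<bar>sA - sB\<bar> * lB"
      using lB unfolding sB_def lB_def
      by (simp add: abs_mult[symmetric] field_simps)
    ultimately show ?thesis by simp
  qed
  have three: "ennreal \<bar>f x - f y\<bar> * indicator {a1..a2} x \<le> (ennreal c1 * F x y + ennreal c2) * indicator {a1..a2} x"
    if y: "y \<in> {b1..b2}" for x y
  proof (cases "x \<in> {a1..a2}")
    case True
    have "\<bar>f x - f y\<bar> \<le> lB * (lam powr (1 - p) * (\<bar>f x - f y\<bar> powr p / \<bar>x - y\<bar> powr p) + lam)"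
      by (rule pw) (use True y sub lam p lB_def in auto)
    then have "ennreal \<bar>f x - f y\<bar> \<le> ennreal (c1 * (\<bar>f x - f y\<bar> powr p / \<bar>x - y\<bar> powr p) + c2)"
      by (intro ennreal_leI) (simp add: c1_def c2_def algebra_simps)
    also have "\<dots> = ennreal c1 * F x y + ennreal c2"
      using c1 by (simp add: F_def ennreal_plus ennreal_mult[symmetric])
    finally show ?thesis using True by simp
  qed simp
  have four: "ennreal (\<bar>sA - f y\<bar> * lA) \<le> ennreal c1 * (\<integral>\<^sup>+x. F x y \<partial>lborel) + ennreal (c2 * lA)"
    if y: "y \<in> {b1..b2}" for y
  proof -
    have "ennreal (\<bar>sA - f y\<bar> * lA) \<le> (\<integral>\<^sup>+x. (ennreal c1 * F x y + ennreal c2) * indicator {a1..a2} x \<partial>lborel)"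
      using one[of y] three[OF y] by (meson order_trans nn_integral_mono)
    also have "\<dots> = (\<integral>\<^sup>+x. ennreal c1 * (F x y * indicator {a1..a2} x) + ennreal c2 * indicator {a1..a2} x \<partial>lborel)"
      by (simp add: distrib_right mult.assoc)
    also have "\<dots> = ennreal c1 * (\<integral>\<^sup>+x. F x y * indicator {a1..a2} x \<partial>lborel) + ennreal c2 * (\<integral>\<^sup>+x. indicator {a1..a2} x \<partial>lborel)"
      by (simp add: nn_integral_add nn_integral_cmult)
    also have "\<dots> \<le> ennreal c1 * (\<integral>\<^sup>+x. F x y \<partial>lborel) + ennreal (c2 * lA)"
    proof (intro add_mono mult_left_mono nn_integral_mono)
      show "ennreal c2 * integral\<^sup>N lborel (indicator {a1..a2}) \<le> ennreal (c2 * lA)"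
        using a c1 by (simp add: lA_def ennreal_mult)
    qed (auto simp: indicator_def)
    finally show ?thesis .
  qed
  have "ennreal (\<bar>sA - sB\<bar> * lB * lA) = ennreal (\<bar>sA - sB\<bar> * lB) * ennreal lA"
    by (rule ennreal_mult) (use lA lB in auto)
  also have "\<dots> \<le> (\<integral>\<^sup>+y. ennreal \<bar>sA - f y\<bar> * indicator {b1..b2} y \<partial>lborel) * ennreal lA"
    using two by (rule mult_right_mono) simp
  also have "\<dots> = (\<integral>\<^sup>+y. ennreal (\<bar>sA - f y\<bar> * lA) * indicator {b1..b2} y \<partial>lborel)"
    using lA by (subst nn_integral_multc[symmetric]) (auto intro!: nn_integral_cong simp: ennreal_mult mult_ac)
  also have "\<dots> \<le> (\<integral>\<^sup>+y. (ennreal c1 * (\<integral>\<^sup>+x. F x y \<partial>lborel) + ennreal (c2 * lA)) * indicator {b1..b2} y \<partial>lborel)"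
    by (intro nn_integral_mono) (auto simp: indicator_def intro: four)
  also have "\<dots> = (\<integral>\<^sup>+y. ennreal c1 * ((\<integral>\<^sup>+x. F x y \<partial>lborel) * indicator {b1..b2} y) + ennreal (c2 * lA) * indicator {b1..b2} y \<partial>lborel)"
    by (simp add: distrib_right mult.assoc)
  also have "\<dots> = ennreal c1 * (\<integral>\<^sup>+y. (\<integral>\<^sup>+x. F x y \<partial>lborel) * indicator {b1..b2} y \<partial>lborel) + ennreal (c2 * lA) * (\<integral>\<^sup>+y. indicator {b1..b2} y \<partial>lborel)"
  proof -
    have m: "(\<lambda>y. \<integral>\<^sup>+x. F x y \<partial>lborel) \<in> borel_measurable lborel"
      unfolding F_def by measurable
    show ?thesis using m by (simp add: nn_integral_add nn_integral_cmult)
  qed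
  also have "\<dots> \<le> ennreal c1 * ennreal s + ennreal (c2 * lA) * ennreal lB"
  proof (intro add_mono mult_left_mono)
    show "(\<integral>\<^sup>+y. (\<integral>\<^sup>+x. F x y \<partial>lborel) * indicator {b1..b2} y \<partial>lborel) \<le> ennreal s"
      unfolding S'[symmetric] by (intro nn_integral_mono) (auto simp: indicator_def)
    show "(\<integral>\<^sup>+y. indicator {b1..b2} y \<partial>lborel) \<le> ennreal lB"
      using a sub by (simp add: lB_def)
  qed auto
  also have "\<dots> = ennreal (c1 * s + c2 * lA * lB)"
    using c1 s0 lA lB by (simp add: ennreal_mult ennreal_plus)
  finally have "\<bar>sA - sB\<bar> * lB * lA \<le> c1 * s + c2 * lA * lB"
    using c1 s0 lA lB by (subst (asm) ennreal_le_iff) auto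
  then have "\<bar>sA - sB\<bar> * (lA * lB) \<le> (lam powr (1 - p) * s / lA + lam * lB) * (lA * lB)"
  proof -
    have "(lam powr (1 - p) * s / lA + lam * lB) * (lA * lB) = c1 * s + c2 * lA * lB"
      using lA lB by (simp add: c1_def c2_def field_simps)
    then show ?thesis using \<open>\<bar>sA - sB\<bar> * lB * lA \<le> _\<close> by (simp add: mult_ac)
  qed
  then have "\<bar>sA - sB\<bar> \<le> lam powr (1 - p) * s / lA + lam * lB"
    using lA lB by (simp add: mult_le_cancel_right)
  then show ?thesis by (simp add: sA_def sB_def lA_def lB_def)
qed


definition sl :: "(real \<Rightarrow> real) \<Rightarrow> real \<Rightarrow> real \<Rightarrow> real" where
  "sl \<phi> u v = (\<phi> v - \<phi> u) / (v - u)"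

lemma step2:
  fixes \<phi> :: "real \<Rightarrow> real" and p s a1 a2 b1 b2 :: real
  assumes d: "\<forall>x. \<phi> differentiable at x" and p: "p > 2"
    and S: "(\<integral>\<^sup>+x. \<integral>\<^sup>+y. ennreal (\<bar>deriv \<phi> x - deriv \<phi> y\<bar> powr p / \<bar>x - y\<bar> powr p) \<partial>lborel \<partial>lborel) = ennreal s"
    and s0: "s \<ge> 0"
    and a: "a1 < a2" and sub: "b1 \<le> a1" "a2 \<le> b2" and dbl: "b2 - b1 \<le> 2 * (a2 - a1)"
  shows "\<bar>sl \<phi> a1 a2 - sl \<phi> b1 b2\<bar> \<le> 4 * s powr (1 / p) * (b2 - b1) powr (1 - 2 / p)"
proof -
  define lA where "lA = a2 - a1"
  define lB where "lB = b2 - b1"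
  have lA: "lA > 0" using a lA_def by simp
  have lB: "lB > 0" using a sub lB_def by simp
  have st: "\<bar>sl \<phi> a1 a2 - sl \<phi> b1 b2\<bar> \<le> lam powr (1 - p) * s / lA + lam * lB" if "lam > 0" for lam
    using step[OF d _ S s0 a sub that] p unfolding sl_def lA_def lB_def by simp
  show ?thesis
  proof (cases "s = 0")
    case True
    have "\<bar>sl \<phi> a1 a2 - sl \<phi> b1 b2\<bar> \<le> 0"
    proof (rule ccontr)
      assume "\<not> ?thesis"
      then have pos: "\<bar>sl \<phi> a1 a2 - sl \<phi> b1 b2\<bar> > 0" by simp
      have "\<bar>sl \<phi> a1 a2 - sl \<phi> b1 b2\<bar> \<le> (\<bar>sl \<phi> a1 a2 - sl \<phi> b1 b2\<bar> / (2 * lB)) * lB"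
        using st[of "\<bar>sl \<phi> a1 a2 - sl \<phi> b1 b2\<bar> / (2 * lB)"] pos lB True by simp
      then show False using pos lB by (simp add: field_simps)
    qed
    then show ?thesis using True by simp
  next
    case False
    then have s: "s > 0" using s0 by simp
    define x where "x = s / (lA * lB)"
    have x: "x > 0" using s lA lB by (simp add: x_def)
    define lam where "lam = x powr (1 / p)"
    have lam: "lam > 0" using x by (simp add: lam_def)
    have lamp: "lam powr p = x" using x p by (simp add: lam_def powr_powr)
    have "lam powr (1 - p) = lam / x"
      using lam by (simp add: powr_diff lamp)
    then have t1: "lam powr (1 - p) * s / lA = lam * lB"
      using x lA lB s by (simp add: x_def field_simps)
    have "\<bar>sl \<phi> a1 a2 - sl \<phi> b1 b2\<bar> \<le> 2 * lam * lB" using st[OF lam] t1 by (simp add: mult_ac)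
    also have "\<dots> \<le> 4 * s powr (1 / p) * lB powr (1 - 2 / p)"
    proof -
      have "lam = s powr (1 / p) / (lA * lB) powr (1 / p)"
        unfolding lam_def x_def using s lA lB by (simp add: powr_divide)
      moreover have "(lA * lB) powr (1 / p) \<ge> (lB * lB / 2) powr (1 / p)"
        by (rule powr_mono2) (use p lA lB dbl lA_def lB_def in \<open>auto simp: field_simps\<close>)
      moreover have "(lB * lB / 2) powr (1 / p) = lB powr (2 / p) / 2 powr (1 / p)"
        using lB by (simp add: powr_divide powr_mult powr_add[symmetric])
      moreover have "2 powr (1 / p) \<le> 2"
        using p by (metis div_by_1 le_divide_eq_1 less_eq_real_def linorder_not_le one_le_numeral order.strict_trans
             powr_le_cancel_iff powr_one_eq_one zero_less_divide_1_iff zero_less_numeral powr_one)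
      moreover have "lB powr (1 - 2 / p) = lB / lB powr (2 / p)"
        using lB by (simp add: powr_diff)
      ultimately show ?thesis
      proof -
        assume e1: "lam = s powr (1 / p) / (lA * lB) powr (1 / p)"
          and e2: "(lA * lB) powr (1 / p) \<ge> (lB * lB / 2) powr (1 / p)"
          and e3: "(lB * lB / 2) powr (1 / p) = lB powr (2 / p) / 2 powr (1 / p)"
          and e4: "2 powr (1 / p) \<le> 2" and e5: "lB powr (1 - 2 / p) = lB / lB powr (2 / p)"
        define q where "q = s powr (1 / p)"
        define L2 where "L2 = lB powr (2 / p)"
        define t where "t = 2 powr (1 / p)"
        have q: "q \<ge> 0" and L2: "L2 > 0" and t: "t > 0" using lB by (auto simp: q_def L2_def t_def)
        have R: "(lB * lB / 2) powr (1 / p) > 0" using lB by simp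
        have "lam \<le> q / (L2 / t)"
        proof -
          have "L2 / t \<le> (lA * lB) powr (1 / p)" using e2 e3 by (simp add: L2_def t_def)
          moreover have "L2 / t > 0" using L2 t by simp
          ultimately show ?thesis unfolding e1 q_def[symmetric] using q
            by (intro divide_left_mono) (use lA lB in \<open>auto intro!: divide_pos_pos mult_pos_pos simp: L2 t\<close>)
        qed
        also have "\<dots> = q * t / L2" by simp
        also have "\<dots> \<le> q * 2 / L2"
          using e4 q L2 by (intro divide_right_mono mult_left_mono) (auto simp: t_def)
        finally have "lam \<le> q * 2 / L2" .
        then have "2 * lam * lB \<le> 2 * (q * 2 / L2) * lB" using lB by (intro mult_right_mono) auto
        also have "\<dots> = 4 * q * (lB / L2)" by simp
        finally show ?thesis using e5 by (simp add: q_def L2_def)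
      qed
    qed
    finally show ?thesis by (simp add: lB_def)
  qed
qed


lemma chain:
  fixes \<phi> :: "real \<Rightarrow> real" and p s :: real
  assumes d: "\<forall>x. \<phi> differentiable at x" and p: "p > 2"
    and S: "(\<integral>\<^sup>+x. \<integral>\<^sup>+y. ennreal (\<bar>deriv \<phi> x - deriv \<phi> y\<bar> powr p / \<bar>x - y\<bar> powr p) \<partial>lborel \<partial>lborel) = ennreal s"
    and s0: "s \<ge> 0"
  shows "\<forall>a1 a2 b1 b2. a1 < a2 \<and> b1 \<le> a1 \<and> a2 \<le> b2 \<and> b2 - b1 \<le> 2 ^ n * (a2 - a1) \<longrightarrow>
    \<bar>sl \<phi> a1 a2 - sl \<phi> b1 b2\<bar> \<le> (4 / (1 - 2 powr (-(1 - 2 / p)))) * s powr (1 / p) * (b2 - b1) powr (1 - 2 / p)"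
proof (induction n)
  define al where "al = 1 - 2 / p"
  have al: "al > 0" using p by (simp add: al_def field_simps)
  have h: "2 powr (-al) < 1"
  proof -
    have "2 powr (-al) < 2 powr 0" using al by (intro powr_less_mono) auto
    then show ?thesis by simp
  qed
  define D where "D = 4 / (1 - 2 powr (-al))"
  have D4: "D \<ge> 4" using h al unfolding D_def
    by (simp add: field_simps)
  case 0
  show ?case
  proof (intro allI impI)
    fix a1 a2 b1 b2 :: real
    assume H: "a1 < a2 \<and> b1 \<le> a1 \<and> a2 \<le> b2 \<and> b2 - b1 \<le> 2 ^ 0 * (a2 - a1)"
    have "\<bar>sl \<phi> a1 a2 - sl \<phi> b1 b2\<bar> \<le> 4 * s powr (1 / p) * (b2 - b1) powr (1 - 2 / p)"
      by (rule step2[OF d p S s0]) (use H in auto)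
    also have "\<dots> \<le> D * s powr (1 / p) * (b2 - b1) powr (1 - 2 / p)"
      using D4 by (intro mult_right_mono) auto
    finally show "\<bar>sl \<phi> a1 a2 - sl \<phi> b1 b2\<bar> \<le> 4 / (1 - 2 powr - (1 - 2 / p)) * s powr (1 / p) * (b2 - b1) powr (1 - 2 / p)"
      by (simp add: D_def al_def)
  qed
next
  define al where "al = 1 - 2 / p"
  have al: "al > 0" using p by (simp add: al_def field_simps)
  have h: "2 powr (-al) < 1"
  proof -
    have "2 powr (-al) < 2 powr 0" using al by (intro powr_less_mono) auto
    then show ?thesis by simp
  qed
  define D where "D = 4 / (1 - 2 powr (-al))"
  have D4: "D \<ge> 4" using h al unfolding D_def
    by (simp add: field_simps)
  have Deq: "D * 2 powr (-al) + 4 = D"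
  proof -
    have "1 - 2 powr (-al) \<noteq> 0" using h by linarith
    then show ?thesis unfolding D_def by (simp add: divide_simps)
  qed
  define q where "q = s powr (1 / p)"
  have q: "q \<ge> 0" by (simp add: q_def)
  case (Suc n)
  have IH: "\<And>a1 a2 b1 b2. a1 < a2 \<Longrightarrow> b1 \<le> a1 \<Longrightarrow> a2 \<le> b2 \<Longrightarrow> b2 - b1 \<le> 2 ^ n * (a2 - a1) \<Longrightarrow>
    \<bar>sl \<phi> a1 a2 - sl \<phi> b1 b2\<bar> \<le> D * q * (b2 - b1) powr al"
    using Suc.IH unfolding D_def al_def q_def by blast
  have st: "\<And>a1 a2 b1 b2. a1 < a2 \<Longrightarrow> b1 \<le> a1 \<Longrightarrow> a2 \<le> b2 \<Longrightarrow> b2 - b1 \<le> 2 * (a2 - a1) \<Longrightarrow>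
    \<bar>sl \<phi> a1 a2 - sl \<phi> b1 b2\<bar> \<le> 4 * q * (b2 - b1) powr al"
    using step2[OF d p S s0] unfolding al_def q_def by blast
  show ?case
  proof (intro allI impI)
    fix a1 a2 b1 b2 :: real
    assume H: "a1 < a2 \<and> b1 \<le> a1 \<and> a2 \<le> b2 \<and> b2 - b1 \<le> 2 ^ Suc n * (a2 - a1)"
    have "\<bar>sl \<phi> a1 a2 - sl \<phi> b1 b2\<bar> \<le> D * q * (b2 - b1) powr al"
    proof (cases "b2 - b1 \<le> 2 * (a2 - a1)")
      case True
      have "\<bar>sl \<phi> a1 a2 - sl \<phi> b1 b2\<bar> \<le> 4 * q * (b2 - b1) powr al"
        by (rule st) (use H True in auto)
      also have "\<dots> \<le> D * q * (b2 - b1) powr al"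
        using D4 q by (intro mult_right_mono) auto
      finally show ?thesis .
    next
      case False
      define m where "m = (b2 - b1) / 2"
      define c where "c = min a1 (b2 - m)"
      have m: "m > a2 - a1" using False by (simp add: m_def)
      have c1: "b1 \<le> c" "c \<le> a1" "a2 \<le> c + m" "c + m \<le> b2" "c < c + m"
      proof -
        have "a1 < a2" "b1 \<le> a1" "a2 \<le> b2" using H by auto
        then show "b1 \<le> c" "c \<le> a1" "a2 \<le> c + m" "c + m \<le> b2" "c < c + m"
        proof -
          have m0: "m > 0" "b2 - m = b1 + m" "a2 - a1 < m" using m \<open>a1 < a2\<close> unfolding m_def by argo+
          have "c = a1 \<or> c = b2 - m" "c \<le> a1" "c \<le> b2 - m" unfolding c_def by auto
          then show "b1 \<le> c" "c \<le> a1" "a2 \<le> c + m" "c + m \<le> b2" "c < c + m"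
            using m0 \<open>b1 \<le> a1\<close> \<open>a2 \<le> b2\<close> by linarith+
        qed
      qed
      have "m \<le> 2 ^ n * (a2 - a1)" using H by (simp add: m_def)
      then have A: "\<bar>sl \<phi> a1 a2 - sl \<phi> c (c + m)\<bar> \<le> D * q * m powr al"
        using IH[of a1 a2 c "c + m"] H c1 by simp
      have B: "\<bar>sl \<phi> c (c + m) - sl \<phi> b1 b2\<bar> \<le> 4 * q * (b2 - b1) powr al"
        by (rule st) (use c1 in \<open>simp_all add: m_def\<close>)
      have mp: "m powr al = (b2 - b1) powr al * 2 powr (-al)"
      proof -
        have "m powr al = (b2 - b1) powr al / 2 powr al"
          unfolding m_def using H by (intro powr_divide)
        then show ?thesis by (simp add: powr_minus divide_inverse)
      qed
      have "\<bar>sl \<phi> a1 a2 - sl \<phi> b1 b2\<bar> \<le> D * q * m powr al + 4 * q * (b2 - b1) powr al"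
        using A B by linarith
      also have "\<dots> = (D * 2 powr (-al) + 4) * q * (b2 - b1) powr al"
        unfolding mp by (simp add: algebra_simps)
      also have "\<dots> = D * q * (b2 - b1) powr al" by (simp add: Deq)
      finally show ?thesis .
    qed
    then show "\<bar>sl \<phi> a1 a2 - sl \<phi> b1 b2\<bar> \<le> 4 / (1 - 2 powr - (1 - 2 / p)) * s powr (1 / p) * (b2 - b1) powr (1 - 2 / p)"
      by (simp add: D_def al_def q_def)
  qed
qed


lemma polar:
  fixes a b c e :: "real \<times> real"
  shows "2 * inner (a - b) (c - e) = (norm (a - e))\<^sup>2 + (norm (b - c))\<^sup>2 - (norm (a - c))\<^sup>2 - (norm (b - e))\<^sup>2"
  by (simp add: power2_norm_eq_inner inner_diff_left inner_diff_right inner_commute algebra_simps)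

lemma unit_sq:
  fixes U W :: "real \<times> real"
  assumes "U \<noteq> 0" "W \<noteq> 0"
  shows "(norm ((1 / norm U) *\<^sub>R U - (1 / norm W) *\<^sub>R W))\<^sup>2 = 2 - 2 * (inner U W / (norm U * norm W))"
    and "(norm ((1 / norm U) *\<^sub>R U + (1 / norm W) *\<^sub>R W))\<^sup>2 = 2 + 2 * (inner U W / (norm U * norm W))"
proof -
  have nU: "inner U U = (norm U)\<^sup>2" "inner W W = (norm W)\<^sup>2" by (simp_all add: power2_norm_eq_inner)
  have pU: "norm U > 0" "norm W > 0" using assms by auto
  show "(norm ((1 / norm U) *\<^sub>R U - (1 / norm W) *\<^sub>R W))\<^sup>2 = 2 - 2 * (inner U W / (norm U * norm W))"
    unfolding power2_norm_eq_inner using pU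
    by (simp add: inner_diff_left inner_diff_right nU inner_commute power2_eq_square field_simps)
  show "(norm ((1 / norm U) *\<^sub>R U + (1 / norm W) *\<^sub>R W))\<^sup>2 = 2 + 2 * (inner U W / (norm U * norm W))"
    unfolding power2_norm_eq_inner using pU
    by (simp add: inner_add_left inner_add_right nU inner_commute power2_eq_square field_simps)
qed

lemma angle_slope:
  fixes a b e f :: real
  assumes "a \<noteq> 0" "e \<noteq> 0"
  shows "1 - (inner (a, b) (e, f) / (norm (a, b) * norm (e, f)))\<^sup>2 \<le> (b / a - f / e)\<^sup>2"
proof -
  have N1: "(norm (a, b))\<^sup>2 = a\<^sup>2 + b\<^sup>2" "(norm (e, f))\<^sup>2 = e\<^sup>2 + f\<^sup>2"
    by (simp_all add: norm_Pair)
  define N where "N = (a\<^sup>2 + b\<^sup>2) * (e\<^sup>2 + f\<^sup>2)"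
  have Npos: "N \<ge> a\<^sup>2 * e\<^sup>2" "a\<^sup>2 * e\<^sup>2 > 0" using assms unfolding N_def
    by (auto simp: algebra_simps add_nonneg_nonneg mult_nonneg_nonneg intro!: add_increasing)
  have E: "(norm (a, b) * norm (e, f))\<^sup>2 = N" by (simp add: power_mult_distrib N1 N_def)
  have Q: "(inner (a, b) (e, f) / (norm (a, b) * norm (e, f)))\<^sup>2 = (a * e + b * f)\<^sup>2 / N"
    by (simp add: power_divide E)
  have id: "N - (a * e + b * f)\<^sup>2 = (a * f - b * e)\<^sup>2"
    unfolding N_def by (simp add: power2_eq_square algebra_simps)
  have "1 - (inner (a, b) (e, f) / (norm (a, b) * norm (e, f)))\<^sup>2 = (N - (a * e + b * f)\<^sup>2) / N"
    unfolding Q using Npos by (simp add: diff_divide_distrib)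
  then have "1 - (inner (a, b) (e, f) / (norm (a, b) * norm (e, f)))\<^sup>2 = (a * f - b * e)\<^sup>2 / N"
    by (simp add: id)
  also have "\<dots> \<le> (a * f - b * e)\<^sup>2 / (a\<^sup>2 * e\<^sup>2)"
    using Npos by (intro divide_left_mono) auto
  also have "\<dots> = (b / a - f / e)\<^sup>2"
    using assms by (simp add: field_simps power2_eq_square)
  finally show ?thesis .
qed


lemma sl_sym: "sl \<phi> u v = sl \<phi> v u"
  unfolding sl_def by (metis minus_diff_eq minus_divide_divide)

lemma one_side:
  fixes \<phi> :: "real \<Rightarrow> real" and p s X1 X2 lo hi :: real
  assumes d: "\<forall>x. \<phi> differentiable at x" and p: "p > 2"
    and S: "(\<integral>\<^sup>+x. \<integral>\<^sup>+y. ennreal (\<bar>deriv \<phi> x - deriv \<phi> y\<bar> powr p / \<bar>x - y\<bar> powr p) \<partial>lborel \<partial>lborel) = ennreal s"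
    and s0: "s \<ge> 0" and X: "X1 \<noteq> X2" "lo \<le> X1" "lo \<le> X2" "X1 \<le> hi" "X2 \<le> hi" and L: "hi - lo \<le> L"
  shows "\<bar>sl \<phi> X1 X2 - sl \<phi> lo hi\<bar> \<le> (4 / (1 - 2 powr (-(1 - 2 / p)))) * s powr (1 / p) * L powr (1 - 2 / p)"
proof -
  define a1 where "a1 = min X1 X2"
  define a2 where "a2 = max X1 X2"
  have a: "a1 < a2" "lo \<le> a1" "a2 \<le> hi" using X by (auto simp: a1_def a2_def)
  have sl: "sl \<phi> X1 X2 = sl \<phi> a1 a2"
    unfolding a1_def a2_def by (cases "X1 \<le> X2") (auto simp: sl_sym min_def max_def)
  obtain n where n: "(hi - lo) / (a2 - a1) < 2 ^ n" using real_arch_pow[of 2] by auto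
  have "hi - lo \<le> 2 ^ n * (a2 - a1)" using n a by (simp add: field_simps)
  then have "\<bar>sl \<phi> a1 a2 - sl \<phi> lo hi\<bar> \<le> (4 / (1 - 2 powr (-(1 - 2 / p)))) * s powr (1 / p) * (hi - lo) powr (1 - 2 / p)"
    using chain[OF d p S s0, of n] a by blast
  also have "\<dots> \<le> (4 / (1 - 2 powr (-(1 - 2 / p)))) * s powr (1 / p) * L powr (1 - 2 / p)"
  proof (intro mult_left_mono powr_mono2)
    have "2 powr (-(1 - 2 / p)) < 2 powr 0" using p by (intro powr_less_mono) (auto simp: field_simps)
    then show "0 \<le> 4 / (1 - 2 powr (-(1 - 2 / p))) * s powr (1 / p)" by simp
  qed (use p a L in \<open>auto simp: field_simps\<close>)
  finally show ?thesis using sl by simp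
qed


lemma sq_dist:
  assumes "z \<in> square a \<delta>" "z' \<in> square a \<delta>"
  shows "dist z z' \<le> sqrt 2 * \<delta>"
proof -
  obtain z1 z2 z1' z2' where zz: "z = (z1, z2)" "z' = (z1', z2')" by (cases z, cases z')
  have b: "\<bar>z1 - z1'\<bar> \<le> \<delta>" "\<bar>z2 - z2'\<bar> \<le> \<delta>" using assms zz by (auto simp: square_def)
  have d0: "\<delta> \<ge> 0" using b by linarith
  have "dist z z' = sqrt ((z1 - z1')\<^sup>2 + (z2 - z2')\<^sup>2)"
    using zz by (simp add: dist_Pair_Pair dist_real_def)
  also have "\<dots> \<le> sqrt (\<delta>\<^sup>2 + \<delta>\<^sup>2)"
    using b d0 by (intro real_sqrt_le_mono add_mono) (auto intro: power2_le_iff_abs_le[THEN iffD2])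
  also have "\<dots> = sqrt 2 * \<delta>" using d0 by (simp add: real_sqrt_mult)
  finally show ?thesis .
qed

lemma iso_inner:
  assumes T: "euclid_coords T"
  shows "inner (T x1 - T x2) (T y1 - T y2) = inner (x1 - x2) (y1 - y2)"
proof -
  have n: "norm (T a - T b) = norm (a - b)" for a b
    using T unfolding euclid_coords_def by (metis dist_norm)
  show ?thesis using polar[of "T x1" "T x2" "T y1" "T y2"] polar[of x1 x2 y1 y2] by (simp add: n)
qed



definition Kc :: "real \<Rightarrow> real \<Rightarrow> real" where
  "Kc p c'' = c'' / (2 * sqrt 2 * (4 / (1 - 2 powr (-(1 - 2 / p)))) * sqrt 2 powr (1 - 2 / p))"

lemma Dpos: fixes p :: real assumes "p > 2" shows "4 / (1 - 2 powr (-(1 - 2 / p))) > 0"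
proof -
  have "2 powr (-(1 - 2 / p)) < 2 powr 0" using assms by (intro powr_less_mono) (auto simp: field_simps)
  then show ?thesis by simp
qed

lemma key:
  fixes p c'' \<delta> :: real and \<phi> :: "real \<Rightarrow> real"
  assumes p: "p > 2" and c: "c'' > 0" and \<delta>: "\<delta> > 0"
    and d: "\<forall>x. \<phi> differentiable at x" and T: "euclid_coords T"
    and G: "\<forall>z\<in>\<Omega>. snd (T z) = \<phi> (fst (T z))"
    and pts: "x1 \<in> \<Omega>" "x2 \<in> \<Omega>" "y1 \<in> \<Omega>" "y2 \<in> \<Omega>" and sq: "\<Omega> \<subseteq> square a \<delta>"
    and ne: "x1 \<noteq> x2" "y1 \<noteq> y2"
    and mn: "min (norm (unitv (x1 - x2) - unitv (y1 - y2))) (norm (unitv (x1 - x2) + unitv (y1 - y2))) > c''"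
  shows "ennreal (Kc p c'' * \<delta> powr (2 / p - 1)) \<le> besov_fun p \<phi>"
proof -
  define I where "I = (\<integral>\<^sup>+x. \<integral>\<^sup>+y. ennreal (\<bar>deriv \<phi> x - deriv \<phi> y\<bar> powr p / \<bar>x - y\<bar> powr p) \<partial>lborel \<partial>lborel)"
  show ?thesis
  proof (cases "I = \<infinity>")
    case True
    then show ?thesis unfolding besov_fun_def I_def[symmetric] by simp
  next
    case False
    define s where "s = enn2real I"
    have S: "I = ennreal s" using False unfolding s_def by (simp add: less_top)
    have s0: "s \<ge> 0" by (simp add: s_def)
    have bf: "besov_fun p \<phi> = ennreal (s powr (1 / p))"
      unfolding besov_fun_def I_def[symmetric] using False by (simp add: s_def)
    define al where "al = 1 - 2 / p"
    have al: "al > 0" using p by (simp add: al_def field_simps)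
    define D where "D = 4 / (1 - 2 powr (-(1 - 2 / p)))"
    have D: "D > 0" using Dpos[OF p] by (simp add: D_def)
    define q where "q = s powr (1 / p)"
    have q: "q \<ge> 0" by (simp add: q_def)
    have nT: "norm (T a - T b) = norm (a - b)" for a b
      using T unfolding euclid_coords_def by (metis dist_norm)
    have hT: "T z = (fst (T z), \<phi> (fst (T z)))" if "z \<in> \<Omega>" for z
      using G that by (metis prod.collapse)
    define X1 where "X1 = fst (T x1)"
    define X2 where "X2 = fst (T x2)"
    define Y1 where "Y1 = fst (T y1)"
    define Y2 where "Y2 = fst (T y2)"
    have X: "X1 \<noteq> X2"
    proof
      assume "X1 = X2"
      then have "T x1 = T x2" using hT pts unfolding X1_def X2_def by metis
      then show False using nT[of x1 x2] ne by simp
    qed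
    have Y: "Y1 \<noteq> Y2"
    proof
      assume "Y1 = Y2"
      then have "T y1 = T y2" using hT pts unfolding Y1_def Y2_def by metis
      then show False using nT[of y1 y2] ne by simp
    qed
    have u: "T x1 - T x2 = (X1 - X2, \<phi> X1 - \<phi> X2)"
      using hT[OF pts(1)] hT[OF pts(2)] unfolding X1_def X2_def by (metis diff_Pair)
    have w: "T y1 - T y2 = (Y1 - Y2, \<phi> Y1 - \<phi> Y2)"
      using hT[OF pts(3)] hT[OF pts(4)] unfolding Y1_def Y2_def by (metis diff_Pair)
    define U where "U = x1 - x2"
    define W where "W = y1 - y2"
    have U0: "U \<noteq> 0" "W \<noteq> 0" using ne by (auto simp: U_def W_def)
    define dd where "dd = inner U W / (norm U * norm W)"
    have dd2: "dd = inner (T x1 - T x2) (T y1 - T y2) / (norm (T x1 - T x2) * norm (T y1 - T y2))"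
      unfolding dd_def U_def W_def by (simp add: iso_inner[OF T] nT)
    define sX where "sX = sl \<phi> X1 X2"
    define sY where "sY = sl \<phi> Y1 Y2"
    have ang: "1 - dd\<^sup>2 \<le> (sX - sY)\<^sup>2"
    proof -
      have "1 - dd\<^sup>2 \<le> ((\<phi> X1 - \<phi> X2) / (X1 - X2) - (\<phi> Y1 - \<phi> Y2) / (Y1 - Y2))\<^sup>2"
        unfolding dd2 u w by (rule angle_slope) (use X Y in auto)
      also have "(\<phi> X1 - \<phi> X2) / (X1 - X2) = sX" unfolding sX_def sl_def by (metis minus_diff_eq minus_divide_divide)
      also have "(\<phi> Y1 - \<phi> Y2) / (Y1 - Y2) = sY" unfolding sY_def sl_def by (metis minus_diff_eq minus_divide_divide)
      finally show ?thesis .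
    qed
    have m1: "c''\<^sup>2 < 2 - 2 * dd" and m2: "c''\<^sup>2 < 2 + 2 * dd"
    proof -
      have "c'' < norm (unitv U - unitv W)" "c'' < norm (unitv U + unitv W)"
        using mn by (auto simp: U_def W_def)
      then have "c''\<^sup>2 < (norm (unitv U - unitv W))\<^sup>2" "c''\<^sup>2 < (norm (unitv U + unitv W))\<^sup>2"
        using c by (auto intro: power_strict_mono)
      then show "c''\<^sup>2 < 2 - 2 * dd" "c''\<^sup>2 < 2 + 2 * dd"
        using unit_sq[OF U0] unfolding unitv_def dd_def by auto
    qed
    have cs: "c''\<^sup>2 < 2 * (sX - sY)\<^sup>2"
    proof -
      have "c''\<^sup>2 > 0" using c by simp
      then have "dd < 1" "-1 < dd" using m1 m2 by linarith+
      then have "\<bar>dd\<bar> < 1" by (simp add: abs_less_iff)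
      have "dd\<^sup>2 = \<bar>dd\<bar> * \<bar>dd\<bar>" by (simp add: power2_eq_square abs_mult_self_eq)
      also have "\<dots> \<le> \<bar>dd\<bar>" using \<open>\<bar>dd\<bar> < 1\<close> by (intro mult_left_le) auto
      finally have dd: "dd\<^sup>2 \<le> \<bar>dd\<bar>" .
      have "c''\<^sup>2 < 2 - 2 * \<bar>dd\<bar>"
      proof (cases "dd < 0")
        case True then show ?thesis using m2 by simp
      next
        case False then show ?thesis using m1 by simp
      qed
      then show ?thesis using dd ang by linarith
    qed
    have spread: "\<bar>fst (T z) - fst (T z')\<bar> \<le> sqrt 2 * \<delta>" if "z \<in> \<Omega>" "z' \<in> \<Omega>" for z z'
    proof -
      have "\<bar>fst (T z) - fst (T z')\<bar> = \<bar>fst (T z - T z')\<bar>" by simp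
      also have "\<dots> \<le> norm (T z - T z')"
        using norm_fst_le[of "fst (T z - T z')" "snd (T z - T z')"] by (simp del: fst_diff snd_diff)
      also have "\<dots> = dist z z'" by (simp add: nT dist_norm)
      also have "\<dots> \<le> sqrt 2 * \<delta>" using sq that by (intro sq_dist) auto
      finally show ?thesis .
    qed
    define lo where "lo = min (min X1 X2) (min Y1 Y2)"
    define hi where "hi = max (max X1 X2) (max Y1 Y2)"
    have lohi: "hi - lo \<le> sqrt 2 * \<delta>"
    proof -
      have "\<forall>z\<in>{X1, X2, Y1, Y2}. \<forall>z'\<in>{X1, X2, Y1, Y2}. \<bar>z - z'\<bar> \<le> sqrt 2 * \<delta>"
        using spread pts \<delta> unfolding X1_def X2_def Y1_def Y2_def by auto
      moreover have "hi \<in> {X1, X2, Y1, Y2}" "lo \<in> {X1, X2, Y1, Y2}"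
        unfolding hi_def lo_def max_def min_def by auto
      ultimately have "\<bar>hi - lo\<bar> \<le> sqrt 2 * \<delta>" by blast
      then show ?thesis by simp
    qed
    have e1: "\<bar>sX - sl \<phi> lo hi\<bar> \<le> D * q * (sqrt 2 * \<delta>) powr al"
      unfolding sX_def D_def q_def al_def
      by (rule one_side[OF d p S[unfolded I_def] s0 X _ _ _ _ lohi]) (auto simp: lo_def hi_def)
    have e2: "\<bar>sY - sl \<phi> lo hi\<bar> \<le> D * q * (sqrt 2 * \<delta>) powr al"
      unfolding sY_def D_def q_def al_def
      by (rule one_side[OF d p S[unfolded I_def] s0 Y _ _ _ _ lohi]) (auto simp: lo_def hi_def)
    have "\<bar>sX - sY\<bar> \<le> 2 * D * q * (sqrt 2 * \<delta>) powr al" using e1 e2 by linarith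
    moreover have "c'' < sqrt 2 * \<bar>sX - sY\<bar>"
    proof -
      have "c''\<^sup>2 < (sqrt 2 * \<bar>sX - sY\<bar>)\<^sup>2" using cs by (simp add: power_mult_distrib)
      from power_less_imp_less_base[OF this] show ?thesis by simp
    qed
    ultimately have cM: "c'' \<le> (2 * sqrt 2 * D * sqrt 2 powr al) * q * \<delta> powr al"
    proof -
      assume a1: "\<bar>sX - sY\<bar> \<le> 2 * D * q * (sqrt 2 * \<delta>) powr al" and a2: "c'' < sqrt 2 * \<bar>sX - sY\<bar>"
      have "sqrt 2 * \<bar>sX - sY\<bar> \<le> sqrt 2 * (2 * D * q * (sqrt 2 * \<delta>) powr al)"
        using a1 by (intro mult_left_mono) auto
      also have "\<dots> = (2 * sqrt 2 * D * sqrt 2 powr al) * q * \<delta> powr al"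
        using \<delta> by (simp add: powr_mult mult_ac)
      finally show ?thesis using a2 by linarith
    qed
    have M: "2 * sqrt 2 * D * sqrt 2 powr al > 0" using D by simp
    have "Kc p c'' * \<delta> powr (2 / p - 1) = c'' / (2 * sqrt 2 * D * sqrt 2 powr al) * \<delta> powr (- al)"
      unfolding Kc_def D_def al_def by (simp add: algebra_simps)
    also have "\<dots> \<le> q * \<delta> powr al * \<delta> powr (- al)"
      using cM M \<delta> by (intro mult_right_mono) (auto simp: divide_le_eq mult_ac)
    also have "\<dots> = q" using \<delta> by (simp add: powr_add[symmetric])
    finally show ?thesis unfolding bf q_def by (rule ennreal_leI)
  qed
qed


theorem mainTheorem8:
  fixes p c c'' :: real
  assumes "2 < p" and "c > 0" and "c'' > 0"
  shows "\<exists>C>0. \<forall>c' > 0. \<forall>(E0 :: (real \<times> real) set) a \<delta>.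
           finite E0 \<longrightarrow> \<delta> > 0 \<longrightarrow> rough p c c' c'' E0 a \<delta> \<longrightarrow>
           besov_set p (square a \<delta> \<inter> E0) \<ge> ennreal (inverse C * \<delta> powr (2 / p - 1))"
proof -
  have Kpos: "Kc p c'' > 0"
    unfolding Kc_def using Dpos[OF assms(1)] assms(3) by simp
  define k where "k = min c (Kc p c'')"
  have k: "k > 0" using Kpos assms by (simp add: k_def)
  show ?thesis
  proof (intro exI[of _ "inverse k"] conjI allI impI)
    show "inverse k > 0" using k by simp
    fix c' :: real and E0 :: "(real \<times> real) set" and a \<delta>
    assume "c' > 0" "finite E0" and \<delta>: "\<delta> > 0" and R: "rough p c c' c'' E0 a \<delta>"
    have ik: "inverse (inverse k) = k" by simp
    have Om: "E0 \<inter> square a \<delta> = square a \<delta> \<inter> E0" by blast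
    from R[unfolded rough_def Om]
    show "ennreal (inverse (inverse k) * \<delta> powr (2 / p - 1)) \<le> besov_set p (square a \<delta> \<inter> E0)"
    proof (elim disjE exE conjE)
      assume "ennreal (c * \<delta> powr (2 / p - 1)) \<le> besov_set p (square a \<delta> \<inter> E0)"
      moreover have "ennreal (k * \<delta> powr (2 / p - 1)) \<le> ennreal (c * \<delta> powr (2 / p - 1))"
        by (intro ennreal_leI mult_right_mono) (auto simp: k_def)
      ultimately show ?thesis unfolding ik by (rule order_trans[rotated])
    next
      fix x1 x2 y1 y2
      assume pts: "x1 \<in> square a \<delta> \<inter> E0" "x2 \<in> square a \<delta> \<inter> E0" "y1 \<in> square a \<delta> \<inter> E0" "y2 \<in> square a \<delta> \<inter> E0"
        and ne: "x1 \<noteq> x2" "y1 \<noteq> y2"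
        and mn: "c'' < min (norm (unitv (x1 - x2) - unitv (y1 - y2))) (norm (unitv (x1 - x2) + unitv (y1 - y2)))"
      show ?thesis unfolding besov_set_def ik
      proof (rule INF_greatest)
        fix \<phi> assume "\<phi> \<in> {\<phi>. (\<forall>x. \<phi> differentiable at x) \<and>
          (\<exists>T. euclid_coords T \<and> (\<forall>z\<in>square a \<delta> \<inter> E0. snd (T z) = \<phi> (fst (T z))))}"
        then obtain T where d: "\<forall>x. \<phi> differentiable at x" and T: "euclid_coords T"
          and G: "\<forall>z\<in>square a \<delta> \<inter> E0. snd (T z) = \<phi> (fst (T z))" by blast
        have "ennreal (Kc p c'' * \<delta> powr (2 / p - 1)) \<le> besov_fun p \<phi>"
          by (rule key[OF assms(1,3) \<delta> d T G pts _ ne mn]) auto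
        moreover have "ennreal (k * \<delta> powr (2 / p - 1)) \<le> ennreal (Kc p c'' * \<delta> powr (2 / p - 1))"
          by (intro ennreal_leI mult_right_mono) (auto simp: k_def)
        ultimately show "ennreal (k * \<delta> powr (2 / p - 1)) \<le> besov_fun p \<phi>" by (rule order_trans[rotated])
      qed
    qed
  qed
qed
end
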